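(* For every integer $n \ge 3$, \[ \mathcal{F}_{T_n} \le \mathcal{F}_{R_n} \le \binom{n}{2}\, \mathcal{F}_{P_n}. \]
   Context: All graphs are finite and simple. For a graph $G$, a fort is a nonempty set $F \subseteq V(G)$ such that every vertex outside $F$ is adjacent to either zero or at least two vertices of $F$. A fort is minimal if no proper subset of it is a fort. $\mathcal{F}_G$ denotes the number of minimal forts of $G$. $\mathcal{F}_{T_n}$ is the maximum of $\mathcal{F}_T$ over all trees $T$ on $n$ vertices, $\mathcal{F}_{R_n}$ is the maximum of $\mathcal{F}_R$ over all forests $R$ on $n$ vertices, and $\mathcal{F}_{P_n}$ is the number of minimal forts of the path $P_n$ on $n$ vertices (equivalently, $\mathcal{F}_{P_n}=a_n$ where $a_1=a_2=a_3=1$ and $a_n=a_{n-2}+a_{n-3}$ for $n\ge4$). *)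

theory Defs
  imports Main
begin

definition simple_graph :: "nat \<Rightarrow> nat set set \<Rightarrow> bool" where
  "simple_graph n E \<longleftrightarrow> (\<forall>e\<in>E. \<exists>u v. u \<noteq> v \<and> u < n \<and> v < n \<and> e = {u, v})"

definition adj :: "nat set set \<Rightarrow> nat \<Rightarrow> nat \<Rightarrow> bool" where
  "adj E u v \<longleftrightarrow> {u, v} \<in> E \<and> u \<noteq> v"

definition is_fort :: "nat \<Rightarrow> nat set set \<Rightarrow> nat set \<Rightarrow> bool" where
  "is_fort n E F \<longleftrightarrow> F \<noteq> {} \<and> F \<subseteq> {0..<n} \<and>
     (\<forall>v\<in>{0..<n} - F. card {u\<in>F. adj E u v} \<noteq> 1)"

definition is_minimal_fort :: "nat \<Rightarrow> nat set set \<Rightarrow> nat set \<Rightarrow> bool" where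
  "is_minimal_fort n E F \<longleftrightarrow> is_fort n E F \<and> (\<forall>F'. F' \<subset> F \<longrightarrow> \<not> is_fort n E F')"

definition num_min_forts :: "nat \<Rightarrow> nat set set \<Rightarrow> nat" where
  "num_min_forts n E = card {F. is_minimal_fort n E F}"

definition has_cycle :: "nat \<Rightarrow> nat set set \<Rightarrow> bool" where
  "has_cycle n E \<longleftrightarrow> (\<exists>vs. length vs \<ge> 3 \<and> distinct vs \<and> set vs \<subseteq> {0..<n} \<and>
      (\<forall>i. Suc i < length vs \<longrightarrow> adj E (vs ! i) (vs ! Suc i)) \<and>
      adj E (last vs) (hd vs))"

definition connected_graph :: "nat \<Rightarrow> nat set set \<Rightarrow> bool" where
  "connected_graph n E \<longleftrightarrow>
     (\<forall>u<n. \<forall>v<n. (u, v) \<in> {(a, b). adj E a b}\<^sup>*)"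

definition is_forest :: "nat \<Rightarrow> nat set set \<Rightarrow> bool" where
  "is_forest n E \<longleftrightarrow> simple_graph n E \<and> \<not> has_cycle n E"

definition is_tree :: "nat \<Rightarrow> nat set set \<Rightarrow> bool" where
  "is_tree n E \<longleftrightarrow> is_forest n E \<and> connected_graph n E"

definition path_edges :: "nat \<Rightarrow> nat set set" where
  "path_edges n = {{i, Suc i} | i. Suc i < n}"

definition F_T :: "nat \<Rightarrow> nat" where
  "F_T n = Max {num_min_forts n E | E. is_tree n E}"

definition F_R :: "nat \<Rightarrow> nat" where
  "F_R n = Max {num_min_forts n E | E. is_forest n E}"

definition F_P :: "nat \<Rightarrow> nat" where
  "F_P n = num_min_forts n (path_edges n)"

end

theory Submission
  imports Defs
begin


fun pad :: "nat \<Rightarrow> nat" where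
  "pad 0 = 0" | "pad (Suc 0) = 1" | "pad (Suc (Suc 0)) = 1"
| "pad (Suc (Suc (Suc n))) = pad (Suc n) + pad n"

lemma pad_rec: "n \<ge> 3 \<Longrightarrow> pad n = pad (n-2) + pad (n-3)"
  by (cases n rule: pad.cases) auto

lemma pad_mono_Suc: "pad n \<le> pad (Suc n)"
proof (induction n rule: less_induct)
  case (less n)
  show ?case
  proof (cases "n < 3")
    case True then show ?thesis by (cases n rule: pad.cases) auto
  next
    case False
    define j where "j = n - 3"
    have j: "n = Suc (Suc (Suc j))" using False unfolding j_def by simp
    have "pad (Suc j) \<le> pad (Suc (Suc j))" "pad j \<le> pad (Suc j)" using less j by auto
    then show ?thesis using j by simp
  qed
qed

lemma pad_mono: "m \<le> n \<Longrightarrow> pad m \<le> pad n"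
  by (induction n) (auto simp: le_Suc_eq intro: le_trans[OF _ pad_mono_Suc])

lemma pad_pos: "n \<ge> 1 \<Longrightarrow> pad n \<ge> 1"
  using pad_mono[of 1 n] by simp

lemma pad_step4: "N \<ge> 4 \<Longrightarrow> pad (Suc N) = pad N + pad (N - 4)"
proof -
  assume "N \<ge> 4"
  then obtain j where j: "N = j + 4" by (metis add.commute le_Suc_ex)
  show ?thesis unfolding j by (simp add: numeral_eq_Suc)
qed

lemma pad_key3: "m \<ge> 5 \<Longrightarrow> 3 * pad m \<le> pad (m + 4)"
proof -
  assume "m \<ge> 5"
  then obtain j where j: "m = j + 5" by (metis add.commute le_Suc_ex)
  have "pad j \<le> pad (Suc j)" by (rule pad_mono_Suc)
  then show ?thesis unfolding j by (simp add: numeral_eq_Suc)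
qed

lemma pad_key: assumes m5: "m \<ge> 5" shows "k \<ge> 1 \<Longrightarrow> k * pad m \<le> pad (m + k + 1)"
proof (induction k rule: nat_induct_at_least)
  case base
  then show ?case using pad_mono[of m "m+2"] by simp
next
  case (Suc k)
  show ?case
  proof (cases "k \<le> 2")
    case True
    then consider "k = 1" | "k = 2" using Suc by linarith
    then show ?thesis
    proof cases
      case 1
      have "pad (m+3) = pad (m+1) + pad m" using pad_rec[of "m+3"] by simp
      then show ?thesis using 1 pad_mono[of m "m+1"] by simp
    next
      case 2
      then show ?thesis using pad_key3[OF m5] by (simp add: add.commute)
    qed
  next
    case False
    have "pad (Suc (m + k + 1)) = pad (m + k + 1) + pad (m + k + 1 - 4)"
      using pad_step4[of "m+k+1"] m5 by simp
    moreover have "pad m \<le> pad (m + k + 1 - 4)" using False by (intro pad_mono) simp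
    ultimately show ?thesis using Suc by simp
  qed
qed

lemma pad_small[simp]: "pad 3 = 1" "pad 4 = 2" "pad 5 = 2" "pad 6 = 3" "pad 7 = 4"
  by (simp_all add: numeral_eq_Suc)

definition hb :: "nat \<Rightarrow> nat" where
  "hb n = (if n < 3 then 2 * n else n * (n - 1) * pad n)"

lemma lin_help: "A + c \<le> B \<Longrightarrow> x \<le> y \<Longrightarrow> 1 \<le> x \<Longrightarrow> A * x + c \<le> B * (y::nat)"
proof -
  assume a: "A + c \<le> B" "x \<le> y" "1 \<le> x"
  have "A * x + c \<le> A * x + c * x" using a(3) by simp
  also have "\<dots> = (A + c) * x" by (simp add: algebra_simps)
  also have "\<dots> \<le> B * x" using a(1) by (rule mult_le_mono1)
  also have "\<dots> \<le> B * y" using a(2) by (rule mult_le_mono2)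
  finally show ?thesis .
qed

lemma hb_I1: "n \<ge> 1 \<Longrightarrow> 2 + hb (n - 1) \<le> hb n"
proof -
  assume n: "n \<ge> 1"
  consider "n = 1" | "n = 2" | "n = 3" | "n \<ge> 4" using n by linarith
  then show ?thesis
  proof cases
    case 4
    then obtain j where j: "n = j + 4" by (metis add.commute le_Suc_ex)
    have "(j+3)*(j+2) * pad (n-1) + 2 \<le> (j+4)*(j+3) * pad n"
      by (rule lin_help) (use pad_mono[of "n-1" n] pad_pos[of "n-1"] j in \<open>auto simp: algebra_simps\<close>)
    then show ?thesis using j by (simp add: hb_def algebra_simps)
  qed (auto simp: hb_def numeral_eq_Suc)
qed

lemma hb_I2: "n \<ge> 2 \<Longrightarrow> 2 + hb (n - 2) \<le> hb n"
proof -
  assume n: "n \<ge> 2"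
  consider "n = 2" | "n = 3" | "n = 4" | "n \<ge> 5" using n by linarith
  then show ?thesis
  proof cases
    case 4
    then obtain j where j: "n = j + 5" by (metis add.commute le_Suc_ex)
    have "(j+3)*(j+2) * pad (n-2) + 2 \<le> (j+5)*(j+4) * pad n"
      by (rule lin_help) (use pad_mono[of "n-2" n] pad_pos[of "n-2"] j in \<open>auto simp: algebra_simps\<close>)
    then show ?thesis using j by (simp add: hb_def algebra_simps)
  qed (auto simp: hb_def numeral_eq_Suc)
qed

lemma hb_I3: "n \<ge> 3 \<Longrightarrow> hb (n - 2) + hb (n - 3) \<le> hb n"
proof -
  assume n: "n \<ge> 3"
  consider "n = 3" | "n = 4" | "n = 5" | "n \<ge> 6" using n by linarith
  then show ?thesis
  proof cases
    case 4
    then obtain j where j: "n = j + 6" by (metis add.commute le_Suc_ex)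
    have p: "pad n = pad (n-2) + pad (n-3)" using pad_rec n by simp
    have "(j+4)*(j+3) * pad (n-2) \<le> (j+6)*(j+5) * pad (n-2)"
      by (rule mult_le_mono1) (simp add: algebra_simps)
    moreover have "(j+3)*(j+2) * pad (n-3) \<le> (j+6)*(j+5) * pad (n-3)"
      by (rule mult_le_mono1) (simp add: algebra_simps)
    ultimately have "(j+4)*(j+3) * pad (n-2) + (j+3)*(j+2) * pad (n-3) \<le> (j+6)*(j+5) * pad n"
      unfolding p by (simp add: algebra_simps)
    then show ?thesis using j by (simp add: hb_def algebra_simps)
  qed (auto simp: hb_def numeral_eq_Suc)
qed

lemma hb_I4: "k \<ge> 2 \<Longrightarrow> k + 1 \<le> n \<Longrightarrow> k * (k - 1) + k * hb (n - k - 1) \<le> hb n"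
proof -
  assume k: "k \<ge> 2" and kn: "k + 1 \<le> n"
  define m where "m = n - k - 1"
  have nm: "n = m + k + 1" using kn m_def by simp
  obtain i where i: "k = i + 2" using k by (metis add.commute le_Suc_ex)
  have n3: "\<not> n < 3" using nm i by simp
  consider "m = 0" | "m = 1" | "m = 2" | "m = 3" | "m = 4" | "m \<ge> 5" by linarith
  then show ?thesis
  proof cases
    case 1
    have "(i+2)*(i+1) * 1 \<le> (i+3)*(i+2) * pad n"
      by (rule mult_le_mono) (use pad_pos[of n] nm in \<open>auto simp: distrib_left distrib_right\<close>)
    then show ?thesis using 1 nm i by (simp add: hb_def algebra_simps)
  next
    case 2
    have "(i+2)*(i+1) + (i+2)*2 \<le> ((i+4)*(i+3)) * pad n"
      using mult_le_mono[of "(i+2)*(i+1) + (i+2)*2" "(i+4)*(i+3)" 1 "pad n"] pad_pos[of n] nm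
      by (simp add: distrib_left distrib_right)
    then show ?thesis using 2 nm i by (simp add: hb_def algebra_simps)
  next
    case 3
    have "(i+2)*(i+1) + (i+2)*4 \<le> ((i+5)*(i+4)) * pad n"
      using mult_le_mono[of "(i+2)*(i+1) + (i+2)*4" "(i+5)*(i+4)" 1 "pad n"] pad_pos[of n] nm
      by (simp add: distrib_left distrib_right)
    then show ?thesis using 3 nm i by (simp add: hb_def algebra_simps)
  next
    case 4
    have "(i+2)*(i+1) + (i+2)*6 \<le> ((i+6)*(i+5)) * pad n"
      using mult_le_mono[of "(i+2)*(i+1) + (i+2)*6" "(i+6)*(i+5)" 1 "pad n"] pad_pos[of n] nm
      by (simp add: distrib_left distrib_right)
    then show ?thesis using 4 nm i by (simp add: hb_def algebra_simps)
  next
    case 5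
    have p7: "4 \<le> pad n" using pad_mono[of 7 n] nm i 5 by (simp add: numeral_eq_Suc)
    have "(i+2)*(i+1) + (i+2)*24 \<le> ((i+7)*(i+6)) * 4"
      by (simp add: algebra_simps)
    also have "\<dots> \<le> ((i+7)*(i+6)) * pad n" using p7 by (rule mult_le_mono2)
    finally show ?thesis using 5 nm i by (simp add: hb_def algebra_simps)
  next
    case 6
    have key: "k * pad m \<le> pad n" using pad_key[OF 6, of k] nm k by simp
    have hm: "hb m = m * (m - 1) * pad m" using 6 by (simp add: hb_def)
    have "k * hb m = m * (m - 1) * (k * pad m)" unfolding hm by (simp add: algebra_simps)
    also have "\<dots> \<le> m * (m - 1) * pad n" using key by (rule mult_le_mono2)
    finally have a: "k * hb m \<le> m * (m - 1) * pad n" .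
    have b: "m * (m - 1) * pad n + k * (k - 1) \<le> n * (n - 1) * pad n"
    proof (rule lin_help)
      obtain j where j: "m = j + 5" using 6 by (metis add.commute le_Suc_ex)
      show "m * (m - 1) + k * (k - 1) \<le> n * (n - 1)" using nm i j by (simp add: algebra_simps)
    qed (use pad_pos[of n] nm in auto)
    show ?thesis using a b n3 m_def by (simp add: hb_def)
  qed
qed



definition fortV :: "nat set \<Rightarrow> nat set set \<Rightarrow> nat set \<Rightarrow> bool" where
  "fortV V E F \<longleftrightarrow> F \<noteq> {} \<and> F \<subseteq> V \<and> (\<forall>v\<in>V - F. card {u\<in>F. adj E u v} \<noteq> 1)"

definition mfort :: "nat set \<Rightarrow> nat set set \<Rightarrow> nat set \<Rightarrow> bool" where
  "mfort V E F \<longleftrightarrow> fortV V E F \<and> (\<forall>G. G \<subset> F \<longrightarrow> \<not> fortV V E G)"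

definition cntV :: "nat set \<Rightarrow> nat set set \<Rightarrow> nat" where
  "cntV V E = card {F. mfort V E F}"

definition nb :: "nat set \<Rightarrow> nat set set \<Rightarrow> nat \<Rightarrow> nat set" where
  "nb V E v = {u\<in>V. adj E u v}"

lemma adj_sym: "adj E u v = adj E v u"
  unfolding adj_def by (auto simp: insert_commute)

lemma nb_sym: "u \<in> V \<Longrightarrow> w \<in> V \<Longrightarrow> u \<in> nb V E w \<longleftrightarrow> w \<in> nb V E u"
  unfolding nb_def by (metis (mono_tags, lifting) adj_sym mem_Collect_eq)

lemma nb_irr: "w \<notin> nb V E w"
  unfolding nb_def adj_def by auto

lemma nb_sub: "nb V E w \<subseteq> V"
  unfolding nb_def by auto

lemma fortV_iff: "V' \<subseteq> V \<Longrightarrow> fortV V' E F \<longleftrightarrow> F \<noteq> {} \<and> F \<subseteq> V' \<and> (\<forall>v\<in>V' - F. card (F \<inter> nb V E v) \<noteq> 1)"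
proof -
  assume "V' \<subseteq> V"
  have "F \<subseteq> V' \<Longrightarrow> {u\<in>F. adj E u v} = F \<inter> nb V E v" for v
    using \<open>V' \<subseteq> V\<close> unfolding nb_def by auto
  then show ?thesis unfolding fortV_def by auto
qed

lemma fortI: assumes "V' \<subseteq> V" "F \<noteq> {}" "F \<subseteq> V'" "\<And>v. v \<in> V' \<Longrightarrow> v \<notin> F \<Longrightarrow> card (F \<inter> nb V E v) \<noteq> 1"
  shows "fortV V' E F"
  unfolding fortV_iff[OF assms(1)] using assms(2-4) by blast

lemma fortD: assumes "V' \<subseteq> V" "fortV V' E F" "v \<in> V'" "v \<notin> F" shows "card (F \<inter> nb V E v) \<noteq> 1"
  using assms(2-4) unfolding fortV_iff[OF assms(1)] by blast

lemma fortD2: "fortV V' E F \<Longrightarrow> F \<noteq> {} \<and> F \<subseteq> V'"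
  unfolding fortV_def by blast

lemma mfortD: "mfort V E F \<Longrightarrow> G \<subset> F \<Longrightarrow> \<not> fortV V E G"
  unfolding mfort_def by blast

lemma finite_mforts: "finite V \<Longrightarrow> finite {F. mfort V E F}"
  by (rule finite_subset[of _ "Pow V"]) (auto simp: mfort_def fortV_def)

lemma card_one_leaf: "F \<inter> nb V E v = {p} \<Longrightarrow> card (F \<inter> nb V E v) = 1"
  by simp

lemma rec_isolated:
  assumes fin: "finite V" and v: "v \<in> V" and nbv: "nb V E v = {}"
  shows "cntV V E \<le> 1 + cntV (V - {v}) E"
proof -
  let ?V1 = "V - {v}"
  have sub: "?V1 \<subseteq> V" by auto
  have "{F. mfort V E F} \<subseteq> insert {v} {F. mfort ?V1 E F}"
  proof
    fix F assume "F \<in> {F. mfort V E F}"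
    then have mF: "mfort V E F" by simp
    then have fF: "fortV V E F" by (simp add: mfort_def)
    show "F \<in> insert {v} {F. mfort ?V1 E F}"
    proof (cases "F = {v}")
      case False
      have vF: "v \<notin> F"
      proof
        assume "v \<in> F"
        have "fortV V E {v}"
          by (rule fortI[OF order_refl]) (use v nbv nb_sym[of _ V v E] in auto)
        moreover have "{v} \<subset> F" using \<open>v \<in> F\<close> False by auto
        ultimately show False using mfortD[OF mF] by blast
      qed
      have FV1: "F \<subseteq> ?V1" using fortD2[OF fF] vF by auto
      have "fortV ?V1 E F"
        by (rule fortI[OF sub]) (use fF fortD2[OF fF] FV1 fortD[OF order_refl fF] in auto)
      moreover have "\<not> fortV ?V1 E G" if "G \<subset> F" for G
      proof
        assume fG: "fortV ?V1 E G"
        have "fortV V E G"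
        proof (rule fortI[OF order_refl])
          fix w assume "w \<in> V" "w \<notin> G"
          then show "card (G \<inter> nb V E w) \<noteq> 1"
            using fortD[OF sub fG, of w] nbv by (cases "w = v") auto
        qed (use fortD2[OF fG] in auto)
        then show False using mfortD[OF mF that] by blast
      qed
      ultimately show ?thesis by (simp add: mfort_def)
    qed simp
  qed
  then have "cntV V E \<le> card (insert {v} {F. mfort ?V1 E F})"
    unfolding cntV_def by (rule card_mono[rotated]) (use finite_mforts[of ?V1 E] fin in auto)
  also have "\<dots> \<le> 1 + cntV ?V1 E" unfolding cntV_def
    using finite_mforts[of ?V1 E] fin by (simp add: card_insert_if)
  finally show ?thesis .
qed

lemma fort_restrict: "V1 \<subseteq> V \<Longrightarrow> fortV V E F \<Longrightarrow> F \<subseteq> V1 \<Longrightarrow> fortV V1 E F"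
  by (rule fortI[of V1 V]) (use fortD2[of V E F] fortD[OF order_refl, of V E F] in auto)

lemma fort_lift:
  assumes "V1 \<subseteq> V" "fortV V1 E G" "\<And>w. w \<in> V \<Longrightarrow> w \<notin> V1 \<Longrightarrow> w \<notin> G \<Longrightarrow> card (G \<inter> nb V E w) \<noteq> 1"
  shows "fortV V E G"
proof (rule fortI[OF order_refl])
  fix w assume "w \<in> V" "w \<notin> G"
  then show "card (G \<inter> nb V E w) \<noteq> 1"
    using fortD[OF assms(1,2), of w] assms(3)[of w] by blast
qed (use fortD2[OF assms(2)] assms(1) in auto)

lemma card_le_Suc_insert: "finite A \<Longrightarrow> card (insert x A) \<le> 1 + card A"
  by (simp add: card_insert_if)

lemma rec_edge:
  assumes fin: "finite V" and uv: "u \<in> V" "v \<in> V" and nbu: "nb V E u = {v}" and nbv: "nb V E v = {u}"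
  shows "cntV V E \<le> 1 + cntV (V - {u, v}) E"
proof -
  let ?V1 = "V - {u, v}"
  have sub: "?V1 \<subseteq> V" by auto
  have "{F. mfort V E F} \<subseteq> insert {u, v} {F. mfort ?V1 E F}"
  proof
    fix F assume "F \<in> {F. mfort V E F}"
    then have mF: "mfort V E F" by simp
    then have fF: "fortV V E F" by (simp add: mfort_def)
    have FV: "F \<subseteq> V" using fortD2[OF fF] by blast
    show "F \<in> insert {u, v} {F. mfort ?V1 E F}"
    proof (cases "F = {u, v}")
      case False
      have uvF: "u \<notin> F \<and> v \<notin> F"
      proof (rule ccontr)
        assume "\<not> (u \<notin> F \<and> v \<notin> F)"
        have both: "u \<in> F \<and> v \<in> F"
        proof (rule ccontr)
          assume nb: "\<not> (u \<in> F \<and> v \<in> F)"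
          then consider "u \<in> F" "v \<notin> F" | "v \<in> F" "u \<notin> F" using \<open>\<not> (u \<notin> F \<and> v \<notin> F)\<close> by blast
          then show False
          proof cases
            case 1
            then have "F \<inter> nb V E v = {u}" using nbv by auto
            then show False using fortD[OF order_refl fF uv(2) 1(2)] by simp
          next
            case 2
            then have "F \<inter> nb V E u = {v}" using nbu by auto
            then show False using fortD[OF order_refl fF uv(1) 2(2)] by simp
          qed
        qed
        have "fortV V E {u, v}"
        proof (rule fortI[OF order_refl])
          fix w assume w: "w \<in> V" "w \<notin> {u, v}"
          have "{u, v} \<inter> nb V E w = {}"
            using w nbu nbv nb_sym[of u V w E] nb_sym[of v V w E] uv by auto
          then show "card ({u, v} \<inter> nb V E w) \<noteq> 1" by simp
        qed (use uv in auto)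
        moreover have "{u, v} \<subset> F" using both False by auto
        ultimately show False using mfortD[OF mF] by blast
      qed
      have FV1: "F \<subseteq> ?V1" using FV uvF by auto
      have "fortV ?V1 E F" by (rule fort_restrict[OF sub fF FV1])
      moreover have "\<not> fortV ?V1 E G" if "G \<subset> F" for G
      proof
        assume fG: "fortV ?V1 E G"
        have GV1: "G \<subseteq> ?V1" using fortD2[OF fG] by blast
        have "fortV V E G"
        proof (rule fort_lift[OF sub fG])
          fix w assume "w \<in> V" "w \<notin> ?V1"
          then have "w = u \<or> w = v" by auto
          then have "G \<inter> nb V E w = {}" using GV1 nbu nbv by auto
          then show "card (G \<inter> nb V E w) \<noteq> 1" by simp
        qed
        then show False using mfortD[OF mF that] by blast
      qed
      ultimately show ?thesis by (simp add: mfort_def)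
    qed simp
  qed
  then have "cntV V E \<le> card (insert {u, v} {F. mfort ?V1 E F})"
    unfolding cntV_def by (rule card_mono[rotated]) (use finite_mforts[of ?V1 E] fin in auto)
  also have "\<dots> \<le> 1 + cntV ?V1 E" unfolding cntV_def
    using finite_mforts[of ?V1 E] fin by (simp add: card_insert_if)
  finally show ?thesis .
qed

lemma rec_path:
  assumes fin: "finite V" and lpq: "l \<in> V" "p \<in> V" "q \<in> V"
    and nbl: "nb V E l = {p}" and nbp: "nb V E p = {l, q}" and lq: "l \<noteq> q"
  shows "cntV V E \<le> cntV (V - {l, p}) E + cntV (V - {l, p, q}) E"
proof -
  let ?V1 = "V - {l, p}" and ?V2 = "V - {l, p, q}"
  have sub1: "?V1 \<subseteq> V" and sub2: "?V2 \<subseteq> V" by auto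
  have pl: "p \<noteq> l" using nbl nb_irr[of l V E] by auto
  have qp: "q \<noteq> p" using nbp nb_irr[of p V E] by auto
  have l_nb: "l \<notin> nb V E w" if "w \<in> V" "w \<noteq> p" for w
    using nb_sym[of l V w E] that lpq nbl by auto
  have p_nb: "p \<notin> nb V E w" if "w \<in> V" "w \<noteq> l" "w \<noteq> q" for w
    using nb_sym[of p V w E] that lpq nbp by auto
  have p_nbq: "p \<in> nb V E q" using nb_sym[of p V q E] lpq nbp by auto
  define A1 where "A1 = {G. mfort ?V1 E G \<and> q \<notin> G}"
  define A2 where "A2 = {G. mfort ?V1 E G \<and> q \<in> G}"
  define M2 where "M2 = {G. mfort ?V2 E G}"
  have main: "{F. mfort V E F} \<subseteq> A1 \<union> insert l ` A2 \<union> (\<lambda>G. G \<union> {l, p}) ` M2"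
  proof
    fix F assume "F \<in> {F. mfort V E F}"
    then have mF: "mfort V E F" by simp
    then have fF: "fortV V E F" by (simp add: mfort_def)
    have FV: "F \<subseteq> V" using fortD2[OF fF] by blast
    have cF: "card (F \<inter> nb V E w) \<noteq> 1" if "w \<in> V" "w \<notin> F" for w
      using fortD[OF order_refl fF that] .
    show "F \<in> A1 \<union> insert l ` A2 \<union> (\<lambda>G. G \<union> {l, p}) ` M2"
    proof (cases "l \<in> F")
      case False
      have pF: "p \<notin> F"
      proof
        assume "p \<in> F"
        then have "F \<inter> nb V E l = {p}" using nbl by auto
        then show False using cF[OF lpq(1) False] by simp
      qed
      have qF: "q \<notin> F"
      proof
        assume "q \<in> F"
        then have "F \<inter> nb V E p = {q}" using nbp False by auto
        then show False using cF[OF lpq(2) pF] by simp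
      qed
      have FV1: "F \<subseteq> ?V1" using FV False pF by auto
      have "mfort ?V1 E F"
        unfolding mfort_def
      proof (intro conjI allI impI)
        show "fortV ?V1 E F" by (rule fort_restrict[OF sub1 fF FV1])
        fix G assume GF: "G \<subset> F"
        show "\<not> fortV ?V1 E G"
        proof
          assume fG: "fortV ?V1 E G"
          have "fortV V E G"
          proof (rule fort_lift[OF sub1 fG])
            fix w assume "w \<in> V" "w \<notin> ?V1"
            then have "w = l \<or> w = p" by auto
            then have "G \<inter> nb V E w = {}" using GF False pF qF nbl nbp by auto
            then show "card (G \<inter> nb V E w) \<noteq> 1" by simp
          qed
          then show False using mfortD[OF mF GF] by blast
        qed
      qed
      then have "F \<in> A1" using qF A1_def by simp
      then show ?thesis by blast
    next
      case lF: True
      show ?thesis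
      proof (cases "p \<in> F")
        case False
        have qF: "q \<in> F"
        proof (rule ccontr)
          assume "q \<notin> F"
          then have "F \<inter> nb V E p = {l}" using nbp lF by auto
          then show False using cF[OF lpq(2) False] by simp
        qed
        let ?F1 = "F - {l}"
        have F1V1: "?F1 \<subseteq> ?V1" using FV False by auto
        have "mfort ?V1 E ?F1"
          unfolding mfort_def
        proof (intro conjI allI impI)
          show "fortV ?V1 E ?F1"
          proof (rule fortI[OF sub1])
            fix w assume w: "w \<in> ?V1" "w \<notin> ?F1"
            then have "?F1 \<inter> nb V E w = F \<inter> nb V E w" using l_nb[of w] by auto
            then show "card (?F1 \<inter> nb V E w) \<noteq> 1" using cF[of w] w by auto
          qed (use qF lq F1V1 in auto)
          fix G assume GF: "G \<subset> ?F1"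
          show "\<not> fortV ?V1 E G"
          proof
            assume fG: "fortV ?V1 E G"
            have GV1: "G \<subseteq> ?V1" using fortD2[OF fG] by blast
            show False
            proof (cases "q \<in> G")
              case True
              have "fortV V E (insert l G)"
              proof (rule fortI[OF order_refl])
                fix w assume w: "w \<in> V" "w \<notin> insert l G"
                show "card (insert l G \<inter> nb V E w) \<noteq> 1"
                proof (cases "w = p")
                  case True
                  then have "insert l G \<inter> nb V E w = {l, q}" using nbp \<open>q \<in> G\<close> GV1 by auto
                  then show ?thesis using lq by simp
                next
                  case False
                  then have "insert l G \<inter> nb V E w = G \<inter> nb V E w" using l_nb[of w] w by auto
                  then show ?thesis using fortD[OF sub1 fG, of w] w False by auto
                qed
              qed (use GV1 lpq in auto)
              moreover have "insert l G \<subset> F" using GF lF by auto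
              ultimately show False using mfortD[OF mF] by blast
            next
              case False
              have "fortV V E G"
              proof (rule fort_lift[OF sub1 fG])
                fix w assume "w \<in> V" "w \<notin> ?V1"
                then have "w = l \<or> w = p" by auto
                then have "G \<inter> nb V E w = {}" using GV1 False nbl nbp by auto
                then show "card (G \<inter> nb V E w) \<noteq> 1" by simp
              qed
              moreover have "G \<subset> F" using GF by auto
              ultimately show False using mfortD[OF mF] by blast
            qed
          qed
        qed
        then have "?F1 \<in> A2" using qF lq A2_def by simp
        moreover have "F = insert l ?F1" using lF by auto
        ultimately show ?thesis by blast
      next
        case pF: True
        have qF: "q \<notin> F"
        proof
          assume qF: "q \<in> F"
          have "fortV V E (F - {p})"
          proof (rule fortI[OF order_refl])
            fix w assume w: "w \<in> V" "w \<notin> F - {p}"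
            show "card ((F - {p}) \<inter> nb V E w) \<noteq> 1"
            proof (cases "w = p")
              case True
              then have "(F - {p}) \<inter> nb V E w = {l, q}" using nbp qF lF pl qp by auto
              then show ?thesis using lq by simp
            next
              case False
              then have wF: "w \<notin> F" using w by auto
              then have "w \<noteq> l" "w \<noteq> q" using lF qF by auto
              then have "(F - {p}) \<inter> nb V E w = F \<inter> nb V E w" using p_nb[of w] w by auto
              then show ?thesis using cF[of w] w wF by auto
            qed
          qed (use FV lF pl in auto)
          moreover have "F - {p} \<subset> F" using pF by auto
          ultimately show False using mfortD[OF mF] by blast
        qed
        let ?F2 = "F - {l, p}"
        have F2V2: "?F2 \<subseteq> ?V2" using FV qF by auto
        have cq: "card (F \<inter> nb V E q) \<noteq> 1" using cF[OF lpq(3) qF] .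
        have "?F2 \<noteq> {}"
        proof
          assume "?F2 = {}"
          then have "F \<subseteq> {l, p}" by auto
          then have "F \<inter> nb V E q = {p}" using p_nbq pF l_nb[OF lpq(3) qp] by auto
          then show False using cq by simp
        qed
        have "mfort ?V2 E ?F2"
          unfolding mfort_def
        proof (intro conjI allI impI)
          show "fortV ?V2 E ?F2"
          proof (rule fortI[OF sub2])
            fix w assume w: "w \<in> ?V2" "w \<notin> ?F2"
            then have "?F2 \<inter> nb V E w = F \<inter> nb V E w" using l_nb[of w] p_nb[of w] by auto
            then show "card (?F2 \<inter> nb V E w) \<noteq> 1" using cF[of w] w by auto
          qed (use \<open>?F2 \<noteq> {}\<close> F2V2 in auto)
          fix G assume GF: "G \<subset> ?F2"
          show "\<not> fortV ?V2 E G"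
          proof
            assume fG: "fortV ?V2 E G"
            have GV2: "G \<subseteq> ?V2" using fortD2[OF fG] by blast
            show False
            proof (cases "card (G \<inter> nb V E q) = 1")
              case True
              have "fortV V E (G \<union> {l, p})"
              proof (rule fortI[OF order_refl])
                fix w assume w: "w \<in> V" "w \<notin> G \<union> {l, p}"
                show "card ((G \<union> {l, p}) \<inter> nb V E w) \<noteq> 1"
                proof (cases "w = q")
                  case True
                  have fin2: "finite (G \<inter> nb V E q)" using finite_subset[OF nb_sub[of V E q] fin] by blast
                  have "(G \<union> {l, p}) \<inter> nb V E w = insert p (G \<inter> nb V E q)"
                    using True p_nbq l_nb[OF lpq(3) qp] by auto
                  moreover have "p \<notin> G \<inter> nb V E q" using GV2 by auto
                  ultimately show ?thesis using fin2 \<open>card (G \<inter> nb V E q) = 1\<close> by simp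
                next
                  case False
                  then have "(G \<union> {l, p}) \<inter> nb V E w = G \<inter> nb V E w" using l_nb[of w] p_nb[of w] w by auto
                  then show ?thesis using fortD[OF sub2 fG, of w] w False by auto
                qed
              qed (use GV2 lpq in auto)
              moreover have "G \<union> {l, p} \<subset> F" using GF lF pF GV2 by auto
              ultimately show False using mfortD[OF mF] by blast
            next
              case False
              have "fortV V E G"
              proof (rule fort_lift[OF sub2 fG])
                fix w assume w: "w \<in> V" "w \<notin> ?V2"
                then consider "w = l" | "w = p" | "w = q" by auto
                then show "card (G \<inter> nb V E w) \<noteq> 1"
                proof cases
                  case 1 then have "G \<inter> nb V E w = {}" using GV2 nbl by auto
                  then show ?thesis by simp
                next
                  case 2 then have "G \<inter> nb V E w = {}" using GV2 nbp by auto
                  then show ?thesis by simp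
                qed (use False in simp)
              qed
              moreover have "G \<subset> F" using GF by auto
              ultimately show False using mfortD[OF mF] by blast
            qed
          qed
        qed
        then have "?F2 \<in> M2" using M2_def by simp
        moreover have "F = ?F2 \<union> {l, p}" using lF pF by auto
        ultimately show ?thesis by blast
      qed
    qed
  qed
  have finA: "finite A1" "finite A2" "finite M2"
    using finite_mforts[of ?V1 E] finite_mforts[of ?V2 E] fin unfolding A1_def A2_def M2_def
    by (auto intro: finite_subset)
  have "cntV V E \<le> card (A1 \<union> insert l ` A2 \<union> (\<lambda>G. G \<union> {l, p}) ` M2)"
    unfolding cntV_def by (rule card_mono[OF _ main]) (use finA in auto)
  also have "\<dots> \<le> card A1 + card (insert l ` A2) + card ((\<lambda>G. G \<union> {l, p}) ` M2)"
    by (meson add_le_mono card_Un_le le_trans order_refl)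
  also have "\<dots> \<le> card A1 + card A2 + card M2"
    using card_image_le[OF finA(2), of "insert l"] card_image_le[OF finA(3), of "\<lambda>G. G \<union> {l, p}"] by linarith
  also have "card A1 + card A2 = cntV ?V1 E"
  proof -
    have "A1 \<union> A2 = {G. mfort ?V1 E G}" "A1 \<inter> A2 = {}" unfolding A1_def A2_def by auto
    then show ?thesis unfolding cntV_def using card_Un_disjoint[OF finA(1,2)] by simp
  qed
  finally show ?thesis unfolding M2_def cntV_def by simp
qed

lemma two_choose2: "2 * (k choose 2) = k * (k - 1)"
proof -
  have "even (k * (k - 1))" by (cases k) auto
  then show ?thesis by (simp add: choose_two)
qed

lemma rec_star:
  assumes fin: "finite V" and pV: "p \<in> V" and Lsub: "L \<subseteq> nb V E p" and cardL: "card L = k"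
    and k2: "k \<ge> 2" and nbL: "\<And>l. l \<in> L \<Longrightarrow> nb V E l = {p}" and nbp: "nb V E p \<subseteq> insert q L"
  shows "2 * cntV V E \<le> k * (k - 1) + k * (2 * cntV (V - insert p L) E)"
proof -
  let ?V1 = "V - insert p L"
  define Q where "Q = nb V E p - L"
  have sub1: "?V1 \<subseteq> V" by auto
  have LV: "L \<subseteq> V" using Lsub nb_sub by blast
  have finL: "finite L" using finite_subset[OF LV fin] .
  have pL: "p \<notin> L" using Lsub nb_irr[of p V E] by auto
  have Qq: "Q \<subseteq> {q}" using nbp Q_def by auto
  have QL: "Q \<inter> L = {}" using Q_def by auto
  have nbpLQ: "nb V E p = L \<union> Q" using Q_def Lsub by auto
  have cardQ: "card (X \<inter> Q) \<le> 1" for X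
  proof -
    have "X \<inter> Q \<subseteq> {q}" using Qq by auto
    then show ?thesis using card_mono[of "{q}" "X \<inter> Q"] by simp
  qed
  have L_nb: "l \<notin> nb V E w" if "l \<in> L" "w \<in> V" "w \<noteq> p" for l w
    using nb_sym[of l V w E] that LV nbL[of l] by auto
  have finI: "finite (X \<inter> nb V E w)" for X w
    using finite_subset[OF nb_sub[of V E w] fin] by blast
  define A1 where "A1 = {G. mfort ?V1 E G \<and> G \<inter> Q = {}}"
  define A2 where "A2 = {G. mfort ?V1 E G \<and> G \<inter> Q \<noteq> {}}"
  define P where "P = {S. S \<subseteq> L \<and> card S = 2}"
  have main: "{F. mfort V E F} \<subseteq> A1 \<union> P \<union> (\<lambda>(a, G). insert a G) ` (L \<times> A2)"
  proof
    fix F assume "F \<in> {F. mfort V E F}"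
    then have mF: "mfort V E F" by simp
    then have fF: "fortV V E F" by (simp add: mfort_def)
    have FV: "F \<subseteq> V" using fortD2[OF fF] by blast
    have cF: "card (F \<inter> nb V E w) \<noteq> 1" if "w \<in> V" "w \<notin> F" for w
      using fortD[OF order_refl fF that] .
    have pF: "p \<notin> F"
    proof
      assume pF: "p \<in> F"
      have LF: "L \<subseteq> F"
      proof
        fix l assume l: "l \<in> L"
        show "l \<in> F"
        proof (rule ccontr)
          assume "l \<notin> F"
          moreover have "F \<inter> nb V E l = {p}" using nbL[OF l] pF by auto
          ultimately show False using cF[of l] l LV by auto
        qed
      qed
      have "fortV V E L"
      proof (rule fortI[OF order_refl])
        fix w assume w: "w \<in> V" "w \<notin> L"
        show "card (L \<inter> nb V E w) \<noteq> 1"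
        proof (cases "w = p")
          case True
          then have "L \<inter> nb V E w = L" using Lsub by auto
          then show ?thesis using cardL k2 by simp
        next
          case False
          then have "L \<inter> nb V E w = {}" using L_nb[of _ w] w by auto
          then show ?thesis by simp
        qed
      qed (use LV cardL k2 in auto)
      moreover have "L \<subset> F" using LF pF pL by auto
      ultimately show False using mfortD[OF mF] by blast
    qed
    show "F \<in> A1 \<union> P \<union> (\<lambda>(a, G). insert a G) ` (L \<times> A2)"
    proof (cases "F \<inter> L = {}")
      case True
      have FQ: "F \<inter> Q = {}"
      proof -
        have "F \<inter> nb V E p = F \<inter> Q" using nbpLQ True by auto
        then have "card (F \<inter> Q) \<noteq> 1" using cF[OF pV pF] by simp
        then have "card (F \<inter> Q) = 0" using cardQ[of F] by linarith
        moreover have "finite (F \<inter> Q)" using finite_subset[OF Qq] by blast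
        ultimately show ?thesis by simp
      qed
      have FV1: "F \<subseteq> ?V1" using FV True pF by auto
      have "mfort ?V1 E F"
        unfolding mfort_def
      proof (intro conjI allI impI)
        show "fortV ?V1 E F" by (rule fort_restrict[OF sub1 fF FV1])
        fix G assume GF: "G \<subset> F"
        show "\<not> fortV ?V1 E G"
        proof
          assume fG: "fortV ?V1 E G"
          have "fortV V E G"
          proof (rule fort_lift[OF sub1 fG])
            fix w assume "w \<in> V" "w \<notin> ?V1"
            then have wc: "w = p \<or> w \<in> L" by auto
            have GF': "G \<subseteq> F" using GF by auto
            then have GLQ: "G \<inter> L = {}" "G \<inter> Q = {}" "p \<notin> G" using True FQ pF by auto
            have "G \<inter> nb V E w = {}"
            proof (cases "w = p")
              case True
              then show ?thesis using GLQ nbpLQ by auto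
            next
              case False
              then have "nb V E w = {p}" using wc nbL by auto
              then show ?thesis using GLQ by auto
            qed
            then show "card (G \<inter> nb V E w) \<noteq> 1" by simp
          qed
          then show False using mfortD[OF mF GF] by blast
        qed
      qed
      then have "F \<in> A1" using FQ A1_def by simp
      then show ?thesis by blast
    next
      case False
      then obtain a where a: "a \<in> F" "a \<in> L" by blast
      show ?thesis
      proof (cases "\<exists>b. b \<in> F \<and> b \<in> L \<and> b \<noteq> a")
        case True
        then obtain b where b: "b \<in> F" "b \<in> L" "b \<noteq> a" by blast
        have "fortV V E {a, b}"
        proof (rule fortI[OF order_refl])
          fix w assume w: "w \<in> V" "w \<notin> {a, b}"
          show "card ({a, b} \<inter> nb V E w) \<noteq> 1"
          proof (cases "w = p")
            case True
            then have "{a, b} \<inter> nb V E w = {a, b}" using Lsub a b by auto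
            then show ?thesis using b by simp
          next
            case False
            then have "{a, b} \<inter> nb V E w = {}" using L_nb[of a w] L_nb[of b w] a b w by auto
            then show ?thesis by simp
          qed
        qed (use a b LV in auto)
        then have "\<not> {a, b} \<subset> F" using mfortD[OF mF] by blast
        moreover have "{a, b} \<subseteq> F" using a b by simp
        ultimately have "F = {a, b}" by blast
        then have "F \<in> P" using a b unfolding P_def by auto
        then show ?thesis by blast
      next
        case False
        then have FL: "F \<inter> L = {a}" using a by blast
        let ?F1 = "F - {a}"
        have aQ: "a \<notin> Q" using QL a by auto
        have FQ: "F \<inter> Q \<noteq> {}"
        proof
          assume FQ: "F \<inter> Q = {}"
          have "F \<inter> nb V E p = {a}" using FQ FL nbpLQ by auto
          then show False using cF[OF pV pF] by simp
        qed
        have F1V1: "?F1 \<subseteq> ?V1" using FV FL pF by auto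
        have F1Q: "?F1 \<inter> Q \<noteq> {}" using FQ aQ by auto
        have "mfort ?V1 E ?F1"
          unfolding mfort_def
        proof (intro conjI allI impI)
          show "fortV ?V1 E ?F1"
          proof (rule fortI[OF sub1])
            fix w assume w: "w \<in> ?V1" "w \<notin> ?F1"
            then have "?F1 \<inter> nb V E w = F \<inter> nb V E w" using L_nb[of a w] a by auto
            then show "card (?F1 \<inter> nb V E w) \<noteq> 1" using cF[of w] w a by auto
          qed (use F1Q F1V1 in auto)
          fix G assume GF: "G \<subset> ?F1"
          show "\<not> fortV ?V1 E G"
          proof
            assume fG: "fortV ?V1 E G"
            have GV1: "G \<subseteq> ?V1" using fortD2[OF fG] by blast
            show False
            proof (cases "G \<inter> Q = {}")
              case False
              then obtain x where x: "x \<in> G" "x \<in> Q" by blast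
              have "fortV V E (insert a G)"
              proof (rule fortI[OF order_refl])
                fix w assume w: "w \<in> V" "w \<notin> insert a G"
                show "card (insert a G \<inter> nb V E w) \<noteq> 1"
                proof (cases "w = p")
                  case True
                  have "{a, x} \<subseteq> insert a G \<inter> nb V E w" using True x a nbpLQ by auto
                  then have "card {a, x} \<le> card (insert a G \<inter> nb V E w)"
                    by (rule card_mono[OF finI])
                  moreover have "a \<noteq> x" using x aQ by auto
                  ultimately show ?thesis by simp
                next
                  case wp: False
                  show ?thesis
                  proof (cases "w \<in> L")
                    case True
                    then have "insert a G \<inter> nb V E w = {}" using nbL[OF True] GV1 a pL by auto
                    then show ?thesis by simp
                  next
                    case False
                    then have "insert a G \<inter> nb V E w = G \<inter> nb V E w" using L_nb[of a w] a w wp by auto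
                    then show ?thesis using fortD[OF sub1 fG, of w] w False wp by auto
                  qed
                qed
              qed (use GV1 a LV in auto)
              moreover have "insert a G \<subset> F" using GF a by auto
              ultimately show False using mfortD[OF mF] by blast
            next
              case True
              have "fortV V E G"
              proof (rule fort_lift[OF sub1 fG])
                fix w assume "w \<in> V" "w \<notin> ?V1"
                then have "w = p \<or> w \<in> L" by auto
                then have "G \<inter> nb V E w = {}" using GV1 True nbpLQ nbL by auto
                then show "card (G \<inter> nb V E w) \<noteq> 1" by simp
              qed
              moreover have "G \<subset> F" using GF by auto
              ultimately show False using mfortD[OF mF] by blast
            qed
          qed
        qed
        then have "?F1 \<in> A2" using F1Q A2_def by simp
        then have "(a, ?F1) \<in> L \<times> A2" using a by simp
        moreover have "F = (\<lambda>(a, G). insert a G) (a, ?F1)" using a by auto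
        ultimately show ?thesis by blast
      qed
    qed
  qed
  have finA: "finite A1" "finite A2"
    using finite_mforts[of ?V1 E] fin unfolding A1_def A2_def by (auto intro: finite_subset)
  have finP: "finite P" unfolding P_def using finL by simp
  have cP: "card P = k choose 2" unfolding P_def using n_subsets[OF finL, of 2] cardL by simp
  have cimg: "card ((\<lambda>(a, G). insert a G) ` (L \<times> A2)) \<le> k * card A2"
    using card_image_le[of "L \<times> A2" "\<lambda>(a, G). insert a G"] finL finA cardL by (simp add: card_cartesian_product)
  have "cntV V E \<le> card (A1 \<union> P \<union> (\<lambda>(a, G). insert a G) ` (L \<times> A2))"
    unfolding cntV_def by (rule card_mono[OF _ main]) (use finA finP finL in auto)
  also have "\<dots> \<le> card A1 + card P + card ((\<lambda>(a, G). insert a G) ` (L \<times> A2))"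
    by (meson add_le_mono card_Un_le le_trans order_refl)
  finally have c1: "cntV V E \<le> card A1 + (k choose 2) + k * card A2" using cP cimg by linarith
  have c2: "card A1 + card A2 = cntV ?V1 E"
  proof -
    have "A1 \<union> A2 = {G. mfort ?V1 E G}" "A1 \<inter> A2 = {}" unfolding A1_def A2_def by auto
    then show ?thesis unfolding cntV_def using card_Un_disjoint[OF finA(1,2)] by simp
  qed
  have "2 * cntV V E \<le> 2 * card A1 + 2 * (k choose 2) + 2 * k * card A2" using c1 by linarith
  also have "\<dots> \<le> k * (k - 1) + k * (2 * (card A1 + card A2))"
  proof -
    have "2 * card A1 \<le> k * (2 * card A1)" using k2 by simp
    moreover have "k * (2 * (card A1 + card A2)) = k * (2 * card A1) + 2 * k * card A2"
      by (simp add: algebra_simps)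
    ultimately show ?thesis unfolding two_choose2 by linarith
  qed
  finally show ?thesis unfolding c2 .
qed



definition acyc :: "nat set \<Rightarrow> nat set set \<Rightarrow> bool" where
  "acyc V E \<longleftrightarrow> \<not> (\<exists>vs. length vs \<ge> 3 \<and> distinct vs \<and> set vs \<subseteq> V \<and>
      (\<forall>i. Suc i < length vs \<longrightarrow> adj E (vs ! i) (vs ! Suc i)) \<and> adj E (last vs) (hd vs))"

lemma acyc_mono: assumes "acyc V E" "W \<subseteq> V" shows "acyc W E"
proof -
  have "set vs \<subseteq> V" if "set vs \<subseteq> W" for vs :: "nat list" using that assms(2) by (rule order_trans)
  then show ?thesis using assms(1) unfolding acyc_def by meson
qed

lemma cycle_exists:
  assumes fin: "finite W" and ne: "W \<noteq> {}" and deg: "\<And>w. w \<in> W \<Longrightarrow> card (nb W E w) \<ge> 2"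
  shows "\<not> acyc W E"
proof -
  define P where "P = {vs. vs \<noteq> [] \<and> distinct vs \<and> set vs \<subseteq> W \<and>
      (\<forall>i. Suc i < length vs \<longrightarrow> adj E (vs ! i) (vs ! Suc i))}"
  have Psub: "P \<subseteq> {xs. set xs \<subseteq> W \<and> length xs \<le> card W}"
  proof
    fix xs assume "xs \<in> P"
    then have d: "distinct xs" and s: "set xs \<subseteq> W" unfolding P_def by auto
    have "length xs = card (set xs)" using d by (simp add: distinct_card)
    also have "\<dots> \<le> card W" using s by (rule card_mono[OF fin])
    finally show "xs \<in> {xs. set xs \<subseteq> W \<and> length xs \<le> card W}" using s by simp
  qed
  have finP: "finite P" by (rule finite_subset[OF Psub finite_lists_length_le[OF fin]])
  obtain w0 where w0: "w0 \<in> W" using ne by blast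
  have "[w0] \<in> P" unfolding P_def using w0 by simp
  then have neP: "P \<noteq> {}" by blast
  define m where "m = Max (length ` P)"
  have "m \<in> length ` P" unfolding m_def using finP neP by simp
  then obtain vs where vs: "vs \<in> P" "length vs = m" by blast
  have maxl: "length ys \<le> m" if "ys \<in> P" for ys
    unfolding m_def using finP that by simp
  have vsne: "vs \<noteq> []" and dvs: "distinct vs" and svs: "set vs \<subseteq> W"
    and avs: "\<And>i. Suc i < length vs \<Longrightarrow> adj E (vs ! i) (vs ! Suc i)"
    using vs(1) unfolding P_def by auto
  define x where "x = last vs"
  have xW: "x \<in> W" using svs vsne x_def by auto
  define pr where "pr = (if length vs \<ge> 2 then vs ! (length vs - 2) else x)"
  have "card (nb W E x) \<ge> 2" using deg[OF xW] .
  then have "\<not> nb W E x \<subseteq> {pr}"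
    using card_mono[of "{pr}" "nb W E x"] by fastforce
  then obtain y where y: "y \<in> nb W E x" "y \<noteq> pr" by blast
  have yW: "y \<in> W" and axy: "adj E x y" using y(1) unfolding nb_def using adj_sym by auto
  have yx: "y \<noteq> x" using axy unfolding adj_def by auto
  show ?thesis
  proof (cases "y \<in> set vs")
    case False
    have "vs @ [y] \<in> P"
      unfolding P_def
    proof (intro CollectI conjI allI impI)
      fix i assume i: "Suc i < length (vs @ [y])"
      show "adj E ((vs @ [y]) ! i) ((vs @ [y]) ! Suc i)"
      proof (cases "Suc i < length vs")
        case True
        then show ?thesis using avs[OF True] by (simp add: nth_append)
      next
        case False
        then have "i = length vs - 1" using i by simp
        then show ?thesis using axy vsne x_def False by (simp add: nth_append last_conv_nth)
      qed
    qed (use dvs svs yW \<open>y \<notin> set vs\<close> in auto)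
    then have "length (vs @ [y]) \<le> m" by (rule maxl)
    then show ?thesis using vs(2) by simp
  next
    case True
    then obtain j where j: "j < length vs" "vs ! j = y" by (auto simp: in_set_conv_nth)
    have jl1: "j \<noteq> length vs - 1" using j yx x_def vsne by (auto simp: last_conv_nth)
    have jl2: "j \<noteq> length vs - 2"
    proof
      assume jj: "j = length vs - 2"
      have "length vs \<ge> 2" using j jl1 by linarith
      then have "pr = vs ! (length vs - 2)" unfolding pr_def by simp
      then show False using y(2) j jj by simp
    qed
    have jlen: "j + 3 \<le> length vs" using j jl1 jl2 by linarith
    define cyc where "cyc = drop j vs"
    have "length cyc \<ge> 3" using jlen cyc_def by simp
    moreover have "distinct cyc" using dvs cyc_def by simp
    moreover have "set cyc \<subseteq> W" using svs cyc_def set_drop_subset by fastforce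
    moreover have "\<forall>i. Suc i < length cyc \<longrightarrow> adj E (cyc ! i) (cyc ! Suc i)"
    proof (intro allI impI)
      fix i assume "Suc i < length cyc"
      then have "Suc (j + i) < length vs" using cyc_def by simp
      then show "adj E (cyc ! i) (cyc ! Suc i)" using avs cyc_def j by simp
    qed
    moreover have "last cyc = x" using cyc_def x_def j by simp
    moreover have "hd cyc = y" using cyc_def j by (simp add: hd_drop_conv_nth)
    ultimately show ?thesis unfolding acyc_def using axy by blast
  qed
qed

lemma nb_restrict: "W \<subseteq> V \<Longrightarrow> nb W E w = nb V E w \<inter> W"
  unfolding nb_def by auto

lemma exists_config:
  assumes fin: "finite V" and ne: "V \<noteq> {}" and ac: "acyc V E"
  shows "(\<exists>v\<in>V. nb V E v = {}) \<or>
    (\<exists>u v. u \<in> V \<and> v \<in> V \<and> nb V E u = {v} \<and> nb V E v = {u}) \<or>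
    (\<exists>l p q. l \<in> V \<and> p \<in> V \<and> q \<in> V \<and> nb V E l = {p} \<and> nb V E p = {l, q} \<and> l \<noteq> q) \<or>
    (\<exists>p L q. p \<in> V \<and> L \<subseteq> nb V E p \<and> card L \<ge> 2 \<and> (\<forall>l\<in>L. nb V E l = {p}) \<and> nb V E p \<subseteq> insert q L)"
proof (cases "\<exists>v\<in>V. nb V E v = {}")
  case True
  then show ?thesis by blast
next
  case noiso: False
  have finnb: "finite (nb V E v)" for v using finite_subset[OF nb_sub fin] .
  have deg1: "\<exists>u. nb V E v = {u}" if "v \<in> V" "card (nb V E v) < 2" for v
  proof -
    have "nb V E v \<noteq> {}" using noiso that by blast
    then have "card (nb V E v) \<noteq> 0" using finnb[of v] by simp
    then have "card (nb V E v) = 1" using that(2) by linarith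
    then show ?thesis using card_1_singletonE by blast
  qed
  define W where "W = {v\<in>V. card (nb V E v) \<ge> 2}"
  have WV: "W \<subseteq> V" unfolding W_def by auto
  show ?thesis
  proof (cases "W = {}")
    case True
    obtain v where v: "v \<in> V" using ne by blast
    have "card (nb V E v) < 2" using True v W_def by auto
    then obtain u where u: "nb V E v = {u}" using deg1 v by blast
    have uV: "u \<in> V" using u nb_sub by blast
    have "card (nb V E u) < 2" using True uV W_def by auto
    then obtain w where w: "nb V E u = {w}" using deg1 uV by blast
    have "v \<in> nb V E u" using nb_sym[of v V u E] u v uV by auto
    then have "nb V E u = {v}" using w by auto
    then show ?thesis using u v uV by blast
  next
    case Wne: False
    have "\<exists>p\<in>W. card (nb W E p) < 2"
    proof (rule ccontr)
      assume "\<not> (\<exists>p\<in>W. card (nb W E p) < 2)"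
      then have "\<And>w. w \<in> W \<Longrightarrow> card (nb W E w) \<ge> 2" by (meson not_le)
      then have "\<not> acyc W E" using cycle_exists[OF finite_subset[OF WV fin] Wne] by blast
      then show False using acyc_mono[OF ac WV] by blast
    qed
    then obtain p where pW: "p \<in> W" and cpW: "card (nb V E p \<inter> W) < 2"
      using nb_restrict[OF WV] by auto
    have pV: "p \<in> V" using pW WV by auto
    have degp: "card (nb V E p) \<ge> 2" using pW W_def by auto
    define L where "L = nb V E p - W"
    have Lsub: "L \<subseteq> nb V E p" unfolding L_def by auto
    have nbL: "\<forall>l\<in>L. nb V E l = {p}"
    proof
      fix l assume l: "l \<in> L"
      then have lV: "l \<in> V" using Lsub nb_sub by blast
      have "card (nb V E l) < 2" using l lV unfolding L_def W_def by auto
      then obtain u where u: "nb V E l = {u}" using deg1 lV by blast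
      have "p \<in> nb V E l" using nb_sym[of p V l E] l Lsub lV pV by auto
      then show "nb V E l = {p}" using u by auto
    qed
    have split: "nb V E p = L \<union> (nb V E p \<inter> W)" unfolding L_def by auto
    have finW: "finite (nb V E p \<inter> W)" using finnb by blast
    have finL: "finite L" using finnb Lsub finite_subset by blast
    have "card (nb V E p) \<le> card L + card (nb V E p \<inter> W)"
      using card_Un_le[of L "nb V E p \<inter> W"] split by simp
    then have cL: "card L \<ge> 1" using degp cpW by linarith
    obtain q where q: "nb V E p \<inter> W \<subseteq> {q}"
    proof (cases "nb V E p \<inter> W = {}")
      case True then show ?thesis using that by blast
    next
      case False
      then have "card (nb V E p \<inter> W) \<noteq> 0" using finW by simp
      then have "card (nb V E p \<inter> W) = 1" using cpW by linarith
      then obtain q where "nb V E p \<inter> W = {q}" using card_1_singletonE by blast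
      then show ?thesis using that by blast
    qed
    show ?thesis
    proof (cases "card L \<ge> 2")
      case True
      have "nb V E p \<subseteq> insert q L" using split q by auto
      then show ?thesis using pV Lsub True nbL by blast
    next
      case False
      then have "card L = 1" using cL by linarith
      then obtain l where l: "L = {l}" using card_1_singletonE by blast
      have "card (nb V E p \<inter> W) \<ge> 1" using degp \<open>card (nb V E p) \<le> card L + card (nb V E p \<inter> W)\<close> l by simp
      then have "nb V E p \<inter> W \<noteq> {}" by auto
      then have pq: "nb V E p \<inter> W = {q}" using q by blast
      have "nb V E p = {l, q}" using split l pq by auto
      moreover have "l \<noteq> q" using l pq L_def by auto
      moreover have "l \<in> V" "q \<in> V" using l pq Lsub nb_sub by blast+
      moreover have "nb V E l = {p}" using nbL l by auto
      ultimately show ?thesis using pV by blast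
    qed
  qed
qed



lemma cnt_empty: "cntV {} E = 0"
proof -
  have "Collect (mfort {} E) = {}" unfolding mfort_def fortV_def by auto
  then show ?thesis unfolding cntV_def by (metis card.empty)
qed

lemma main_bound: "finite V \<Longrightarrow> acyc V E \<Longrightarrow> 2 * cntV V E \<le> hb (card V)"
proof (induction "card V" arbitrary: V rule: less_induct)
  case less
  note fin = less.prems(1) and ac = less.prems(2)
  let ?n = "card V"
  have IH: "2 * cntV V' E \<le> hb (card V')" if "V' \<subseteq> V" "card V' < ?n" for V'
    using less.hyps[OF that(2)] finite_subset[OF that(1) fin] acyc_mono[OF ac that(1)] by blast
  show ?case
  proof (cases "V = {}")
    case True
    then show ?thesis by (simp add: cnt_empty hb_def)
  next
    case ne: False
    have n1: "?n \<ge> 1" using ne fin by (simp add: Suc_le_eq card_gt_0_iff)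
    from exists_config[OF fin ne ac] consider
      (iso) v where "v \<in> V" "nb V E v = {}"
    | (edge) u v where "u \<in> V" "v \<in> V" "nb V E u = {v}" "nb V E v = {u}"
    | (path) l p q where "l \<in> V" "p \<in> V" "q \<in> V" "nb V E l = {p}" "nb V E p = {l, q}" "l \<noteq> q"
    | (star) p L q where "p \<in> V" "L \<subseteq> nb V E p" "card L \<ge> 2" "\<forall>l\<in>L. nb V E l = {p}" "nb V E p \<subseteq> insert q L"
      by (elim disjE exE conjE bexE; blast)
    then show ?thesis
    proof cases
      case iso
      have c: "card (V - {v}) = ?n - 1" using iso fin by simp
      have "2 * cntV V E \<le> 2 + 2 * cntV (V - {v}) E" using rec_isolated[OF fin iso] by linarith
      also have "\<dots> \<le> 2 + hb (?n - 1)" using IH[of "V - {v}"] c n1 by fastforce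
      also have "\<dots> \<le> hb ?n" using hb_I1[OF n1] .
      finally show ?thesis .
    next
      case edge
      have uv: "u \<noteq> v" using edge(3) nb_irr[of u V E] by auto
      have c: "card (V - {u, v}) = ?n - 2" using edge uv fin by (simp add: card_Diff_subset)
      have n2: "?n \<ge> 2"
      proof -
        have "{u, v} \<subseteq> V" using edge by auto
        then have "card {u, v} \<le> ?n" by (rule card_mono[OF fin])
        then show ?thesis using uv by simp
      qed
      have "2 * cntV V E \<le> 2 + 2 * cntV (V - {u, v}) E" using rec_edge[OF fin edge] by linarith
      also have "\<dots> \<le> 2 + hb (?n - 2)" using IH[of "V - {u, v}"] c n2 by fastforce
      also have "\<dots> \<le> hb ?n" using hb_I2[OF n2] .
      finally show ?thesis .
    next
      case path
      have pl: "p \<noteq> l" using path(4) nb_irr[of l V E] by auto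
      have qp: "q \<noteq> p" using path(5) nb_irr[of p V E] by auto
      have c1: "card (V - {l, p}) = ?n - 2" using path pl fin by (simp add: card_Diff_subset)
      have c2: "card (V - {l, p, q}) = ?n - 3" using path pl qp fin by (simp add: card_Diff_subset)
      have n3: "?n \<ge> 3"
      proof -
        have "{l, p, q} \<subseteq> V" using path by auto
        then have "card {l, p, q} \<le> ?n" by (rule card_mono[OF fin])
        then show ?thesis using pl qp path(6) by simp
      qed
      have "2 * cntV V E \<le> 2 * cntV (V - {l, p}) E + 2 * cntV (V - {l, p, q}) E"
        using rec_path[OF fin path] by linarith
      also have "\<dots> \<le> hb (?n - 2) + hb (?n - 3)"
        using IH[of "V - {l, p}"] IH[of "V - {l, p, q}"] c1 c2 n3 by fastforce
      also have "\<dots> \<le> hb ?n" using hb_I3[OF n3] .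
      finally show ?thesis .
    next
      case star
      define k where "k = card L"
      have LV: "L \<subseteq> V" using star(2) nb_sub by blast
      have pL: "p \<notin> L" using star(2) nb_irr[of p V E] by auto
      have finL: "finite L" using finite_subset[OF LV fin] .
      have c: "card (V - insert p L) = ?n - k - 1"
      proof -
        have "card (insert p L) = k + 1" using pL finL k_def by simp
        moreover have "insert p L \<subseteq> V" using star(1) LV by auto
        ultimately show ?thesis using card_Diff_subset[of "insert p L" V] finL by simp
      qed
      have kn: "k + 1 \<le> ?n"
      proof -
        have "card (insert p L) \<le> ?n" using star(1) LV by (intro card_mono[OF fin]) auto
        then show ?thesis using pL finL k_def by simp
      qed
      have k2: "k \<ge> 2" using star(3) k_def by simp
      have "2 * cntV V E \<le> k * (k - 1) + k * (2 * cntV (V - insert p L) E)"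
        using rec_star[OF fin star(1,2) k_def[symmetric] k2 _ star(5)] star(4) by blast
      also have "\<dots> \<le> k * (k - 1) + k * hb (?n - k - 1)"
        using IH[of "V - insert p L"] c kn k2 by (intro add_le_mono order_refl mult_le_mono2) fastforce
      also have "\<dots> \<le> hb ?n" using hb_I4[OF k2 kn] .
      finally show ?thesis .
    qed
  qed
qed



lemma rec_path_lower:
  assumes fin: "finite V" and lpq: "l \<in> V" "p \<in> V" "q \<in> V"
    and nbl: "nb V E l = {p}" and nbp: "nb V E p = {l, q}" and lq: "l \<noteq> q"
  shows "card {G. mfort (V - {l, p}) E G \<and> q \<in> G}
       + card {G. mfort (V - {l, p, q}) E G \<and> card (G \<inter> nb V E q) = 1} \<le> cntV V E"
proof -
  let ?V1 = "V - {l, p}" and ?V2 = "V - {l, p, q}"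
  define B2 where "B2 = {G. mfort ?V1 E G \<and> q \<in> G}"
  define B3 where "B3 = {G. mfort ?V2 E G \<and> card (G \<inter> nb V E q) = 1}"
  have sub1: "?V1 \<subseteq> V" and sub2: "?V2 \<subseteq> V" by auto
  have pl: "p \<noteq> l" using nbl nb_irr[of l V E] by auto
  have qp: "q \<noteq> p" using nbp nb_irr[of p V E] by auto
  have l_nb: "l \<notin> nb V E w" if "w \<in> V" "w \<noteq> p" for w
    using nb_sym[of l V w E] that lpq nbl by auto
  have p_nb: "p \<notin> nb V E w" if "w \<in> V" "w \<noteq> l" "w \<noteq> q" for w
    using nb_sym[of p V w E] that lpq nbp by auto
  have p_nbq: "p \<in> nb V E q" using nb_sym[of p V q E] lpq nbp by auto
  have finI: "finite (X \<inter> nb V E w)" for X w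
    using finite_subset[OF nb_sub[of V E w] fin] by blast
  have im1: "insert l G \<in> {F. mfort V E F}" if G: "G \<in> B2" for G
  proof -
    have mG: "mfort ?V1 E G" and qG: "q \<in> G" using G B2_def by auto
    have fG: "fortV ?V1 E G" using mG mfort_def by blast
    have GV1: "G \<subseteq> ?V1" using fortD2[OF fG] by blast
    have "fortV V E (insert l G)"
    proof (rule fortI[OF order_refl])
      fix w assume w: "w \<in> V" "w \<notin> insert l G"
      show "card (insert l G \<inter> nb V E w) \<noteq> 1"
      proof (cases "w = p")
        case True
        then have "insert l G \<inter> nb V E w = {l, q}" using nbp qG GV1 by auto
        then show ?thesis using lq by simp
      next
        case False
        then have "insert l G \<inter> nb V E w = G \<inter> nb V E w" using l_nb[of w] w by auto
        then show ?thesis using fortD[OF sub1 fG, of w] w False by auto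
      qed
    qed (use GV1 lpq in auto)
    moreover have "\<not> fortV V E H" if HG: "H \<subset> insert l G" for H
    proof
      assume fH: "fortV V E H"
      have cH: "card (H \<inter> nb V E w) \<noteq> 1" if "w \<in> V" "w \<notin> H" for w
        using fortD[OF order_refl fH that] .
      have pH: "p \<notin> H" using HG GV1 pl by auto
      show False
      proof (cases "l \<in> H")
        case True
        have qH: "q \<in> H"
        proof (rule ccontr)
          assume "q \<notin> H"
          then have "H \<inter> nb V E p = {l}" using nbp True by auto
          then show False using cH[OF lpq(2) pH] by simp
        qed
        have "fortV ?V1 E (H - {l})"
        proof (rule fortI[OF sub1])
          fix w assume w: "w \<in> ?V1" "w \<notin> H - {l}"
          then have "(H - {l}) \<inter> nb V E w = H \<inter> nb V E w" using l_nb[of w] by auto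
          then show "card ((H - {l}) \<inter> nb V E w) \<noteq> 1" using cH[of w] w by auto
        qed (use qH lq HG GV1 in auto)
        moreover have "H - {l} \<subset> G" using HG True GV1 by auto
        ultimately show False using mfortD[OF mG] by blast
      next
        case False
        then have HsG: "H \<subseteq> G" using HG by auto
        have fH1: "fortV ?V1 E H" by (rule fort_restrict[OF sub1 fH]) (use HsG GV1 in auto)
        show False
        proof (cases "H = G")
          case True
          then have "H \<inter> nb V E p = {q}" using nbp qG False by auto
          then show False using cH[OF lpq(2) pH] by simp
        next
          case False
          then show False using mfortD[OF mG, of H] HsG fH1 by blast
        qed
      qed
    qed
    ultimately show ?thesis by (simp add: mfort_def)
  qed
  have im2: "G \<union> {l, p} \<in> {F. mfort V E F}" if G: "G \<in> B3" for G
  proof -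
    have mG: "mfort ?V2 E G" and cq: "card (G \<inter> nb V E q) = 1" using G B3_def by auto
    have fG: "fortV ?V2 E G" using mG mfort_def by blast
    have GV2: "G \<subseteq> ?V2" using fortD2[OF fG] by blast
    have "fortV V E (G \<union> {l, p})"
    proof (rule fortI[OF order_refl])
      fix w assume w: "w \<in> V" "w \<notin> G \<union> {l, p}"
      show "card ((G \<union> {l, p}) \<inter> nb V E w) \<noteq> 1"
      proof (cases "w = q")
        case True
        have "(G \<union> {l, p}) \<inter> nb V E w = insert p (G \<inter> nb V E q)"
          using True p_nbq l_nb[OF lpq(3) qp] by auto
        moreover have "p \<notin> G \<inter> nb V E q" using GV2 by auto
        ultimately show ?thesis using finI[of G q] cq by simp
      next
        case False
        then have "(G \<union> {l, p}) \<inter> nb V E w = G \<inter> nb V E w" using l_nb[of w] p_nb[of w] w by auto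
        then show ?thesis using fortD[OF sub2 fG, of w] w False by auto
      qed
    qed (use GV2 lpq in auto)
    moreover have "\<not> fortV V E H" if HG: "H \<subset> G \<union> {l, p}" for H
    proof
      assume fH: "fortV V E H"
      have cH: "card (H \<inter> nb V E w) \<noteq> 1" if "w \<in> V" "w \<notin> H" for w
        using fortD[OF order_refl fH that] .
      have qH: "q \<notin> H" using HG GV2 lq qp by auto
      have lp: "l \<in> H \<longleftrightarrow> p \<in> H"
      proof
        assume lH: "l \<in> H"
        show "p \<in> H"
        proof (rule ccontr)
          assume pH: "p \<notin> H"
          then have "H \<inter> nb V E p = {l}" using nbp lH qH by auto
          then show False using cH[OF lpq(2) pH] by simp
        qed
      next
        assume pH: "p \<in> H"
        show "l \<in> H"
        proof (rule ccontr)
          assume lH: "l \<notin> H"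
          then have "H \<inter> nb V E l = {p}" using nbl pH by auto
          then show False using cH[OF lpq(1) lH] by simp
        qed
      qed
      show False
      proof (cases "l \<in> H")
        case True
        then have pH: "p \<in> H" using lp by simp
        have ne: "H - {l, p} \<noteq> {}"
        proof
          assume "H - {l, p} = {}"
          then have "H \<inter> nb V E q = {p}" using pH p_nbq l_nb[OF lpq(3) qp] by auto
          then show False using cH[OF lpq(3) qH] by simp
        qed
        have "fortV ?V2 E (H - {l, p})"
        proof (rule fortI[OF sub2])
          fix w assume w: "w \<in> ?V2" "w \<notin> H - {l, p}"
          then have "(H - {l, p}) \<inter> nb V E w = H \<inter> nb V E w" using l_nb[of w] p_nb[of w] by auto
          then show "card ((H - {l, p}) \<inter> nb V E w) \<noteq> 1" using cH[of w] w by auto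
        qed (use ne HG GV2 qH in auto)
        moreover have "H - {l, p} \<subset> G" using HG True pH GV2 by auto
        ultimately show False using mfortD[OF mG] by blast
      next
        case False
        then have pH: "p \<notin> H" using lp by simp
        then have HsG: "H \<subseteq> G" using HG False by auto
        have fH2: "fortV ?V2 E H" by (rule fort_restrict[OF sub2 fH]) (use HsG GV2 in auto)
        show False
        proof (cases "H = G")
          case True
          then show False using cH[OF lpq(3) qH] cq by simp
        next
          case False
          then show False using mfortD[OF mG, of H] HsG fH2 by blast
        qed
      qed
    qed
    ultimately show ?thesis by (simp add: mfort_def)
  qed
  have finB: "finite B2" "finite B3"
    using finite_mforts[of ?V1 E] finite_mforts[of ?V2 E] fin unfolding B2_def B3_def
    by (auto intro: finite_subset)
  have inj1: "inj_on (insert l) B2"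
  proof (rule inj_onI)
    fix x y assume "x \<in> B2" "y \<in> B2" "insert l x = insert l y"
    moreover have "l \<notin> x" "l \<notin> y" using \<open>x \<in> B2\<close> \<open>y \<in> B2\<close> unfolding B2_def mfort_def fortV_def by auto
    ultimately show "x = y" by (metis insert_ident)
  qed
  have inj2: "inj_on (\<lambda>G. G \<union> {l, p}) B3"
  proof (rule inj_onI)
    fix x y assume xy: "x \<in> B3" "y \<in> B3" "x \<union> {l, p} = y \<union> {l, p}"
    have "x \<subseteq> ?V2" "y \<subseteq> ?V2" using xy(1,2) unfolding B3_def mfort_def fortV_def by auto
    then show "x = y" using xy(3) by blast
  qed
  have disj: "insert l ` B2 \<inter> (\<lambda>G. G \<union> {l, p}) ` B3 = {}"
  proof -
    have "p \<notin> insert l G" if "G \<in> B2" for G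
      using that pl unfolding B2_def mfort_def fortV_def by auto
    then show ?thesis by auto
  qed
  have "card B2 + card B3 = card (insert l ` B2) + card ((\<lambda>G. G \<union> {l, p}) ` B3)"
    using card_image[OF inj1] card_image[OF inj2] by simp
  also have "\<dots> = card (insert l ` B2 \<union> (\<lambda>G. G \<union> {l, p}) ` B3)"
    using card_Un_disjoint[OF finite_imageI[OF finB(1)] finite_imageI[OF finB(2)] disj] by simp
  also have "\<dots> \<le> cntV V E" unfolding cntV_def
    by (rule card_mono[OF finite_mforts[OF fin]]) (use im1 im2 in blast)
  finally show ?thesis unfolding B2_def B3_def .
qed



lemma adj_path: "adj (path_edges N) u v \<longleftrightarrow> (Suc u = v \<and> v < N) \<or> (Suc v = u \<and> u < N)"
  unfolding adj_def path_edges_def by (auto simp: doubleton_eq_iff)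

lemma nb_path: "m \<le> N \<Longrightarrow> v < m \<Longrightarrow> nb {0..<m} (path_edges N) v = {u. u < m \<and> (Suc u = v \<or> Suc v = u)}"
  unfolding nb_def adj_path by auto

lemma nb_path_mid: assumes "m \<le> N" "Suc v < m" "0 < v" shows "nb {0..<m} (path_edges N) v = {v - 1, Suc v}"
  unfolding nb_path[OF assms(1) Suc_lessD[OF assms(2)]] using assms by auto

lemma nb_path_end: assumes "m \<le> N" "2 \<le> m" shows "nb {0..<m} (path_edges N) (m - 1) = {m - 2}"
proof -
  have "m - 1 < m" using assms by simp
  show ?thesis unfolding nb_path[OF assms(1) \<open>m - 1 < m\<close>] using assms by auto
qed

lemma path_last_in:
  assumes mN: "m \<le> N" and f: "fortV {0..<m} (path_edges N) F"
  shows "m - 1 \<in> F"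
proof -
  have ne: "F \<noteq> {}" and Fs: "F \<subseteq> {0..<m}" using fortD2[OF f] by auto
  have finF: "finite F" using finite_subset[OF Fs] by simp
  define x where "x = Max F"
  have xF: "x \<in> F" using x_def finF ne by simp
  have xm: "x < m" using xF Fs by auto
  have xmax: "y \<le> x" if "y \<in> F" for y using x_def finF that by simp
  show ?thesis
  proof (rule ccontr)
    assume nF: "m - 1 \<notin> F"
    have "x \<noteq> m - 1" using xF nF by auto
    then have x1: "Suc x < m" using xm by linarith
    have "Suc x \<notin> F" using xmax[of "Suc x"] by auto
    moreover have "F \<inter> nb {0..<m} (path_edges N) (Suc x) = {x}"
    proof (rule set_eqI)
      fix y
      show "y \<in> F \<inter> nb {0..<m} (path_edges N) (Suc x) \<longleftrightarrow> y \<in> {x}"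
        unfolding nb_path[OF mN x1] using xmax[of y] xF xm by auto
    qed
    ultimately show False using fortD[OF order_refl f, of "Suc x"] x1 by simp
  qed
qed

lemma exists_mfort: "finite V \<Longrightarrow> fortV V E F \<Longrightarrow> \<exists>G. mfort V E G"
proof (induction "card F" arbitrary: F rule: less_induct)
  case less
  show ?case
  proof (cases "mfort V E F")
    case False
    then obtain G where G: "G \<subset> F" "fortV V E G" using less.prems(2) unfolding mfort_def by blast
    have "finite F" using fortD2[OF less.prems(2)] less.prems(1) finite_subset by blast
    then have "card G < card F" using G(1) psubset_card_mono by blast
    then show ?thesis using less.hyps G(2) less.prems(1) by blast
  qed blast
qed

lemma cnt_pos: "finite V \<Longrightarrow> V \<noteq> {} \<Longrightarrow> cntV V E \<ge> 1"
proof -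
  assume fin: "finite V" and ne: "V \<noteq> {}"
  have "fortV V E V" unfolding fortV_def using ne by auto
  then obtain G where "mfort V E G" using exists_mfort[OF fin] by blast
  then have "{F. mfort V E F} \<noteq> {}" by blast
  then have "card {F. mfort V E F} > 0" using finite_mforts[OF fin, of E] card_gt_0_iff by blast
  then show ?thesis unfolding cntV_def by linarith
qed

lemma path_rec_lower:
  assumes m4: "m \<ge> 4" and mN: "m \<le> N"
  shows "cntV {0..<m-2} (path_edges N) + cntV {0..<m-3} (path_edges N) \<le> cntV {0..<m} (path_edges N)"
proof -
  let ?E = "path_edges N" and ?V = "{0..<m}"
  let ?l = "m - 1" and ?p = "m - 2" and ?q = "m - 3"
  have nbl: "nb ?V ?E ?l = {?p}" using nb_path_end[OF mN] m4 by simp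
  have e1: "m - 2 - 1 = m - 3" "Suc (m - 2) = m - 1" "m - 3 - 1 = m - 4" "Suc (m - 3) = m - 2"
    using m4 by simp_all
  have nbp: "nb ?V ?E ?p = {?l, ?q}" using nb_path_mid[OF mN, of ?p] m4 unfolding e1 by (simp add: insert_commute)
  have nbq: "nb ?V ?E ?q = {m - 4, ?p}" using nb_path_mid[OF mN, of ?q] m4 unfolding e1 by simp
  have V1: "?V - {?l, ?p} = {0..<m-2}" using m4 by auto
  have V2: "?V - {?l, ?p, ?q} = {0..<m-3}" using m4 by auto
  have B2: "{G. mfort {0..<m-2} ?E G \<and> ?q \<in> G} = {G. mfort {0..<m-2} ?E G}"
  proof -
    have "?q \<in> G" if "mfort {0..<m-2} ?E G" for G
      using path_last_in[of "m-2" N G] that mN m4 unfolding mfort_def by (simp add: numeral_eq_Suc)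
    then show ?thesis by blast
  qed
  have B3: "{G. mfort {0..<m-3} ?E G \<and> card (G \<inter> nb ?V ?E ?q) = 1} = {G. mfort {0..<m-3} ?E G}"
  proof -
    have "card (G \<inter> nb ?V ?E ?q) = 1" if "mfort {0..<m-3} ?E G" for G
    proof -
      have f: "fortV {0..<m-3} ?E G" using that unfolding mfort_def by blast
      have "m - 4 \<in> G" using path_last_in[OF _ f] mN m4 by (simp add: numeral_eq_Suc)
      moreover have "G \<subseteq> {0..<m-3}" using fortD2[OF f] by blast
      ultimately have "G \<inter> nb ?V ?E ?q = {m - 4}" using nbq m4 by auto
      then show ?thesis by simp
    qed
    then show ?thesis by blast
  qed
  have "?l \<noteq> ?q" using m4 by simp
  from rec_path_lower[OF _ _ _ _ nbl nbp this] m4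
  show ?thesis unfolding V1 V2 B2 B3 cntV_def by simp
qed

lemma pad_le_path: "m \<le> N \<Longrightarrow> pad m \<le> cntV {0..<m} (path_edges N)"
proof (induction m rule: less_induct)
  case (less m)
  show ?case
  proof (cases "m \<ge> 4")
    case True
    have "pad m = pad (m - 2) + pad (m - 3)" using pad_rec True by simp
    also have "\<dots> \<le> cntV {0..<m-2} (path_edges N) + cntV {0..<m-3} (path_edges N)"
      using less.IH[of "m-2"] less.IH[of "m-3"] less.prems True by (intro add_le_mono) auto
    also have "\<dots> \<le> cntV {0..<m} (path_edges N)" by (rule path_rec_lower[OF True less.prems])
    finally show ?thesis .
  next
    case False
    show ?thesis
    proof (cases "m = 0")
      case True then show ?thesis by simp
    next
      case m0: False
      have "m = 1 \<or> m = 2 \<or> m = 3" using False m0 by linarith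
      then have "pad m = 1" by (elim disjE) (simp_all add: numeral_eq_Suc)
      then show ?thesis using cnt_pos[of "{0..<m}" "path_edges N"] m0 by simp
    qed
  qed
qed

lemma is_fort_eq: "is_fort n E F = fortV {0..<n} E F"
  unfolding is_fort_def fortV_def by (rule refl)

lemma is_mf_eq: "is_minimal_fort n E F = mfort {0..<n} E F"
  unfolding is_minimal_fort_def mfort_def is_fort_eq by (rule refl)

lemma num_min_forts_eq: "num_min_forts n E = cntV {0..<n} E"
  unfolding num_min_forts_def cntV_def is_mf_eq by (rule refl)

lemma forest_acyc: "is_forest n E \<Longrightarrow> acyc {0..<n} E"
  unfolding is_forest_def has_cycle_def acyc_def by (erule conjE)

definition star_edges :: "nat \<Rightarrow> nat set set" where
  "star_edges n = {{0, i} | i. 0 < i \<and> i < n}"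

lemma adj_star: "adj (star_edges n) u v \<longleftrightarrow> (u = 0 \<and> 0 < v \<and> v < n) \<or> (v = 0 \<and> 0 < u \<and> u < n)"
  unfolding adj_def star_edges_def by (auto simp: doubleton_eq_iff)

lemma star_simple: "simple_graph n (star_edges n)"
  unfolding simple_graph_def
proof
  fix e assume "e \<in> star_edges n"
  then obtain i where i: "e = {0, i}" "0 < i" "i < n" unfolding star_edges_def by blast
  show "\<exists>u v. u \<noteq> v \<and> u < n \<and> v < n \<and> e = {u, v}"
    by (rule exI[of _ 0], rule exI[of _ i]) (use i in simp)
qed

lemma star_tree: assumes "n \<ge> 1" shows "is_tree n (star_edges n)"
proof -
  let ?E = "star_edges n"
  have sg: "simple_graph n ?E" by (rule star_simple)
  have nc: "\<not> has_cycle n ?E"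
  proof
    assume "has_cycle n ?E"
    then obtain vs where l3: "length vs \<ge> 3" and d: "distinct vs"
      and a: "\<And>i. Suc i < length vs \<Longrightarrow> adj ?E (vs ! i) (vs ! Suc i)" and al: "adj ?E (last vs) (hd vs)"
      unfolding has_cycle_def by blast
    have "vs \<noteq> []" using l3 by auto
    have a01: "adj ?E (vs ! 0) (vs ! 1)" using a[of 0] l3 by simp
    have a12: "adj ?E (vs ! 1) (vs ! 2)" using a[of 1] l3 by (simp add: numeral_2_eq_2)
    have d01: "vs ! 0 \<noteq> vs ! 1" "vs ! 1 \<noteq> vs ! 2" "vs ! 0 \<noteq> vs ! 2"
      using d l3 \<open>vs \<noteq> []\<close> nth_eq_iff_index_eq[of vs 0 1] nth_eq_iff_index_eq[of vs 1 2] nth_eq_iff_index_eq[of vs 0 2]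
      by simp_all
    obtain j where j: "j < length vs" "j \<noteq> 1" "j \<noteq> 2" "adj ?E (vs ! 2) (vs ! j)"
    proof (cases "length vs = 3")
      case True
      have "last vs = vs ! (length vs - 1)" using \<open>vs \<noteq> []\<close> by (rule last_conv_nth)
      then have "last vs = vs ! 2" using True by simp
      moreover have "hd vs = vs ! 0" using l3 by (cases vs) auto
      ultimately show ?thesis using that[of 0] al l3 \<open>vs \<noteq> []\<close> by simp
    next
      case False
      then show ?thesis using that[of 3] a[of 2] l3 by simp
    qed
    have dj: "vs ! j \<noteq> vs ! 1" "vs ! j \<noteq> vs ! 2"
      using d j l3 nth_eq_iff_index_eq[of vs j 1] nth_eq_iff_index_eq[of vs j 2] by simp_all
    show False
    proof (cases "vs ! 1 = 0")
      case True
      then show False using j(4) dj d01 unfolding adj_star by auto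
    next
      case False
      then show False using a01 a12 d01 unfolding adj_star by auto
    qed
  qed
  have conn: "connected_graph n ?E"
    unfolding connected_graph_def
  proof (intro allI impI)
    fix u v assume u: "u < n" and v: "v < n"
    let ?R = "{(a, b). adj ?E a b}"
    have "(u, 0) \<in> ?R\<^sup>*"
      using u by (cases "u = 0") (auto simp: adj_star intro: r_into_rtrancl)
    moreover have "(0, v) \<in> ?R\<^sup>*"
      using v by (cases "v = 0") (auto simp: adj_star intro: r_into_rtrancl)
    ultimately show "(u, v) \<in> ?R\<^sup>*" by (rule rtrancl_trans)
  qed
  show ?thesis unfolding is_tree_def is_forest_def using sg nc conn by simp
qed

theorem theorem1:
  fixes n :: nat
  assumes "n \<ge> 3"
  shows "F_T n \<le> F_R n \<and> F_R n \<le> (n choose 2) * F_P n"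
proof -
  define SR where "SR = {num_min_forts n E | E. is_forest n E}"
  define ST where "ST = {num_min_forts n E | E. is_tree n E}"
  have "SR \<subseteq> (\<lambda>E. num_min_forts n E) ` Pow (Pow {0..<n})"
  proof
    fix x assume "x \<in> SR"
    then obtain E where E: "x = num_min_forts n E" "is_forest n E" unfolding SR_def by blast
    have "E \<subseteq> Pow {0..<n}" using E(2) unfolding is_forest_def simple_graph_def by fastforce
    then show "x \<in> (\<lambda>E. num_min_forts n E) ` Pow (Pow {0..<n})" using E(1) by blast
  qed
  then have finSR: "finite SR" by (rule finite_subset) simp
  have tree: "is_tree n (star_edges n)" using star_tree assms by simp
  have neST: "ST \<noteq> {}" unfolding ST_def using tree by blast
  have STSR: "ST \<subseteq> SR" unfolding ST_def SR_def is_tree_def by blast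
  have neSR: "SR \<noteq> {}" using neST STSR by blast
  have part1: "F_T n \<le> F_R n"
    unfolding F_T_def F_R_def ST_def[symmetric] SR_def[symmetric]
    by (rule Max_mono[OF STSR neST finSR])
  have "F_R n \<in> SR" unfolding F_R_def SR_def[symmetric] using finSR neSR by simp
  then obtain E where E: "F_R n = num_min_forts n E" "is_forest n E" unfolding SR_def by blast
  have "2 * F_R n \<le> hb n"
    using main_bound[of "{0..<n}" E] forest_acyc[OF E(2)] E(1) num_min_forts_eq by simp
  also have "\<dots> = n * (n - 1) * pad n" using assms by (simp add: hb_def)
  also have "\<dots> \<le> n * (n - 1) * F_P n"
    using pad_le_path[of n n] num_min_forts_eq unfolding F_P_def by simp
  also have "\<dots> = 2 * ((n choose 2) * F_P n)" using two_choose2[of n] by simp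
  finally have part2: "F_R n \<le> (n choose 2) * F_P n" by simp
  show ?thesis using part1 part2 by simp
qed

end
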